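(* Let $k\geq 2$ and let $\mathcal{T}$ be a generalized $k$-forest whose vertex set $V(\mathcal T)$ (the union of its edges) has $v$ elements. Then there is a tight $k$-tree $\mathcal{T}^+$ with vertex set $V(\mathcal T)$ such that every edge of $\mathcal{T}$ is an edge of $\mathcal{T}^+$.
   Context: A $k$-graph is a family of $k$-element sets (edges); its vertex set is the union of its edges. Generalized $k$-forests are defined inductively as sequences of $k$-sets: a single $k$-set $E_1$ is a generalized $k$-forest. If $\{E_1,\dots,E_u\}$ is a generalized $k$-forest with vertex set $V=E_1\cup\dots\cup E_u$, and $A_{u+1}\subseteq E_i$ for some $1\leq i\leq u$ (with $A_{u+1}$ possibly empty), and $B$ is a set with $B\cap V=\emptyset$ and $|A_{u+1}|+|B|=k$, then $\{E_1,\dots,E_u,E_{u+1}\}$ with $E_{u+1}:=A_{u+1}\cup B$ is a generalized $k$-forest; $A_{u+1}$ is called the defining set of $E_{u+1}$ (so $A_{u+1}=E_{u+1}\cap(E_1\cup\dots\cup E_u)$). A generalized $k$-forest is a generalized $k$-tree if it is connected (equivalently, all defining sets $A_2,\dots,A_{q}$ are nonempty). It is a tight $k$-forest if every defining set is either empty or has exactly $k-1$ elements, and a tight $k$-tree if it is a connected tight $k$-forest, i.e. every defining set has exactly $k-1$ elements. *)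

theory Defs
  imports Main
begin

definition verts :: "'a set list \<Rightarrow> 'a set" where
  "verts Es = \<Union> (set Es)"

inductive gen_forest :: "nat \<Rightarrow> 'a set list \<Rightarrow> bool" for k :: nat where
  single: "finite E \<Longrightarrow> card E = k \<Longrightarrow> gen_forest k [E]"
| extend: "gen_forest k Es \<Longrightarrow> i < length Es \<Longrightarrow> A \<subseteq> Es ! i \<Longrightarrow>
           finite B \<Longrightarrow> B \<inter> verts Es = {} \<Longrightarrow> card A + card B = k \<Longrightarrow>
           gen_forest k (Es @ [A \<union> B])"

inductive tight_tree :: "nat \<Rightarrow> 'a set list \<Rightarrow> bool" for k :: nat where
  single: "finite E \<Longrightarrow> card E = k \<Longrightarrow> tight_tree k [E]"
| extend: "tight_tree k Es \<Longrightarrow> i < length Es \<Longrightarrow> A \<subseteq> Es ! i \<Longrightarrow>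
           finite B \<Longrightarrow> B \<inter> verts Es = {} \<Longrightarrow> card A + card B = k \<Longrightarrow>
           card A = k - 1 \<Longrightarrow>
           tight_tree k (Es @ [A \<union> B])"

end

theory Submission
  imports Defs
begin

lemma verts_append[simp]: "verts (Es @ [E]) = verts Es \<union> E"
  by (auto simp: verts_def)

lemma tight_edges: "tight_tree k Es \<Longrightarrow> E \<in> set Es \<Longrightarrow> finite E \<and> card E = k"
proof (induction arbitrary: E rule: tight_tree.induct)
  case (single E) then show ?case by simp
next
  case (extend Es i A B)
  show ?case
  proof (cases "E \<in> set Es")
    case True then show ?thesis using extend by blast
  next
    case False
    then have E: "E = A \<union> B" using extend by simp
    have fi: "finite (Es ! i)" "card (Es!i) = k" using extend nth_mem by blast+
    have fA: "finite A" using fi extend finite_subset by blast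
    have "A \<subseteq> verts Es" using extend nth_mem unfolding verts_def by blast
    then have "A \<inter> B = {}" using extend by blast
    then show ?thesis using E fA extend(4,6) by (simp add: card_Un_disjoint)
  qed
qed

lemma grow:
  assumes "finite B"
  shows "tight_tree k Tp \<Longrightarrow> F \<in> set Tp \<Longrightarrow> A \<subseteq> F \<Longrightarrow> B \<inter> verts Tp = {}
    \<Longrightarrow> card A + card B = k \<Longrightarrow>
    \<exists>Tp'. tight_tree k Tp' \<and> verts Tp' = verts Tp \<union> B \<and> set Tp \<subseteq> set Tp' \<and> A \<union> B \<in> set Tp'"
  using assms
proof (induction B arbitrary: Tp F A rule: finite_induct)
  case empty
  have "finite F" "card F = k" using tight_edges empty by blast+
  then have "A = F" using card_subset_eq[OF \<open>finite F\<close> empty(3)] empty(5) by simp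
  then show ?case using empty by auto
next
  case (insert b B)
  have fF: "finite F" "card F = k" using tight_edges insert(4,5) by blast+
  have fA: "finite A" using fF insert(6) finite_subset by blast
  have "card A < card F" using insert(1,2,8) fF by simp
  then have "\<not> F \<subseteq> A"
  proof (intro notI)
    assume "F \<subseteq> A"
    then have "card F \<le> card A" using card_mono fA by blast
    then show False using \<open>card A < card F\<close> by simp
  qed
  then obtain c where c: "c \<in> F" "c \<notin> A" by blast
  have FV: "F \<subseteq> verts Tp" using insert(5) unfolding verts_def by blast
  define F' where "F' = (F - {c}) \<union> {b}"
  have bV: "b \<notin> verts Tp" using insert(7) by blast
  obtain i where i: "i < length Tp" "Tp ! i = F" using insert(5) by (auto simp: in_set_conv_nth)
  have cF: "card (F - {c}) = k - 1" using c fF by simp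
  have T1: "tight_tree k (Tp @ [F'])" unfolding F'_def
    apply (rule tight_tree.extend[OF insert(4) i(1)])
    using i bV cF fF c card_gt_0_iff[of F] by auto
  have A': "A \<union> {b} \<subseteq> F'" using F'_def insert(6) c by blast
  have dis: "B \<inter> verts (Tp @ [F']) = {}"
  proof -
    have "F \<subseteq> verts Tp" using insert(5) unfolding verts_def by blast
    then show ?thesis using insert(2) insert(7) by (auto simp: F'_def)
  qed
  have cA: "card (A \<union> {b}) + card B = k"
  proof -
    have "b \<notin> A" using insert(6) FV bV by blast
    then show ?thesis using insert(1,2,8) fA by simp
  qed
  have F'in: "F' \<in> set (Tp @ [F'])" by simp
  from insert.IH[OF T1 F'in A' dis cA]
  obtain Tp' where Tp': "tight_tree k Tp'" "verts Tp' = verts (Tp @ [F']) \<union> B"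
      "set (Tp @ [F']) \<subseteq> set Tp'" "A \<union> {b} \<union> B \<in> set Tp'" by blast
  have v: "verts (Tp @ [F']) \<union> B = verts Tp \<union> insert b B"
    using FV by (auto simp: F'_def)
  then have "tight_tree k Tp' \<and> verts Tp' = verts Tp \<union> insert b B \<and> set Tp \<subseteq> set Tp' \<and> A \<union> insert b B \<in> set Tp'"
    using Tp' v by auto
  then show ?case by blast
qed

theorem proposition3p1:
  fixes k :: nat and T :: "'a set list"
  assumes "k \<ge> 2" and "gen_forest k T"
  shows "\<exists>Tp :: 'a set list. tight_tree k Tp \<and> verts Tp = verts T \<and> set T \<subseteq> set Tp"
  using assms(2)
proof (induction rule: gen_forest.induct)
  case (single E)
  have "tight_tree k [E]" using single by (rule tight_tree.single)
  then have "tight_tree k [E] \<and> verts [E] = verts [E] \<and> set [E] \<subseteq> set [E]" by simp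
  then show ?case by (rule exI)
next
  case (extend Es i A B)
  note h = \<open>i < length Es\<close> \<open>A \<subseteq> Es ! i\<close> \<open>finite B\<close> \<open>B \<inter> verts Es = {}\<close> \<open>card A + card B = k\<close>
  from extend.IH obtain Tp where Tp: "tight_tree k Tp" "verts Tp = verts Es" "set Es \<subseteq> set Tp" by blast
  have F: "Es ! i \<in> set Tp" using h(1) Tp(3) nth_mem by blast
  have AV: "A \<subseteq> verts Es" using h(1,2) nth_mem unfolding verts_def by blast
  have BV: "B \<inter> verts Tp = {}" using Tp(2) h(4) by simp
  from grow[OF h(3) Tp(1) F h(2) BV h(5)]
  obtain Tp' where T': "tight_tree k Tp'" "verts Tp' = verts Tp \<union> B" "set Tp \<subseteq> set Tp'" "A \<union> B \<in> set Tp'"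
    by blast
  have v: "verts Tp' = verts (Es @ [A \<union> B])" using T'(2) Tp(2) AV by auto
  have s: "set (Es @ [A \<union> B]) \<subseteq> set Tp'" using T'(3,4) Tp(3) by auto
  have "tight_tree k Tp' \<and> verts Tp' = verts (Es @ [A \<union> B]) \<and> set (Es @ [A \<union> B]) \<subseteq> set Tp'"
    using T'(1) v s by simp
  then show ?case by (rule exI)
qed

end
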